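(* Consider a sequence of problems indexed by $n$ with a fixed integer $m\ge1$, a support set $\mathcal{S}\subseteq\{1,\dots,n\}$ of size $s=s(n)$, and a mean $\theta_1=\theta_1(n)>0$. Observations of component $i$ are i.i.d. $\mathcal{N}(0,1)$ if $i\notin\mathcal{S}$ and i.i.d. $\mathcal{N}(\theta_1,1)$ if $i\in\mathcal{S}$, independent across components and draws. Run sequential thresholding with $K=(1+\epsilon)\log_2 n$ passes, $\epsilon>0$: set $\mathcal{S}_0=\{1,\dots,n\}$; for $k=1,\dots,K$, for each $i\in\mathcal{S}_{k-1}$ take $m$ fresh observations $y^{(k)}_{i,1},\dots,y^{(k)}_{i,m}$, compute $T^{(k)}_{i,m}=\frac1m\sum_{j=1}^m y^{(k)}_{i,j}$, and set $\mathcal{S}_k=\{i\in\mathcal{S}_{k-1}:T^{(k)}_{i,m}>0\}$ (the threshold $0$ being the median of $T^{(k)}_{i,m}$ under the null). If $\theta_1>\sqrt{\frac{2}{m}\log(s\log_2 n)}$, then sequential thresholding is reliable, i.e. $\lim_{n\to\infty}\mathbb{P}(\mathcal{S}_K\neq\mathcal{S})=0$.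
   Context: A support estimator $\widehat{\mathcal{S}}(n)$ is reliable if $\lim_{n\to\infty}\mathbb{P}(\widehat{\mathcal{S}}(n)\neq\mathcal{S}(n))=0$. The inequality on $\theta_1$ is understood as a condition on the growth of $\theta_1(n)$ with $n$. *)

theory Defs
  imports "HOL-Probability.Probability"
begin

text \<open>Observation array: y (i, k, j) is the j-th observation (j = 1..m) of component i
  (i = 1..n) taken in pass k (k = 1..K).\<close>

definition obs_space :: "nat \<Rightarrow> nat \<Rightarrow> nat \<Rightarrow> nat set \<Rightarrow> real \<Rightarrow> (nat \<times> nat \<times> nat \<Rightarrow> real) measure" where
  "obs_space n K m S \<theta> =
     PiM ({1..n} \<times> {1..K} \<times> {1..m})
       (\<lambda>(i, k, j). density lborel (normal_density (if i \<in> S then \<theta> else 0) 1))"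

definition test_stat :: "nat \<Rightarrow> (nat \<times> nat \<times> nat \<Rightarrow> real) \<Rightarrow> nat \<Rightarrow> nat \<Rightarrow> real" where
  "test_stat m y i k = (\<Sum>j = 1..m. y (i, k, j)) / real m"

fun seq_thr :: "nat \<Rightarrow> nat \<Rightarrow> (nat \<times> nat \<times> nat \<Rightarrow> real) \<Rightarrow> nat \<Rightarrow> nat set" where
  "seq_thr n m y 0 = {1..n}"
| "seq_thr n m y (Suc k) = {i \<in> seq_thr n m y k. test_stat m y i (Suc k) > 0}"

definition num_passes :: "real \<Rightarrow> nat \<Rightarrow> nat" where
  "num_passes \<epsilon> n = nat \<lceil>(1 + \<epsilon>) * log 2 (real n)\<rceil>"

end

theory Submission
  imports Defs "HOL-Real_Asymp.Real_Asymp"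
begin


lemma coords:
  fixes I :: "'a set" and \<mu> :: "'a \<Rightarrow> real"
  assumes fin: "finite I" and ne: "I \<noteq> {}"
  defines "M \<equiv> PiM I (\<lambda>p. density lborel (normal_density (\<mu> p) 1))"
  shows "prob_space M"
    and "prob_space.indep_vars M (\<lambda>_. borel) (\<lambda>p x. x p) I"
    and "\<And>p. p \<in> I \<Longrightarrow> distributed M lborel (\<lambda>x. x p) (normal_density (\<mu> p) 1)"
proof -
  have pN: "\<And>p. prob_space (density lborel (normal_density (\<mu> p) 1))"
    by (rule prob_space_normal_density) simp
  show P: "prob_space M" unfolding M_def
    by (intro prob_space_PiM pN)
  have dc: "distr M (density lborel (normal_density (\<mu> p) 1)) (\<lambda>x. x p) = density lborel (normal_density (\<mu> p) 1)" if "p \<in> I" for p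
    unfolding M_def by (rule distr_PiM_component[OF pN that])
  have dc2: "distr M borel (\<lambda>x. x p) = density lborel (normal_density (\<mu> p) 1)" if "p \<in> I" for p
    using dc[OF that] by (subst (asm) distr_cong[where N="density lborel (normal_density (\<mu> p) 1)" and L=borel and g="\<lambda>x. x p"]) auto
  have meas: "(\<lambda>x. x p) \<in> measurable M borel" if "p \<in> I" for p
    unfolding M_def using that by measurable
  show "prob_space.indep_vars M (\<lambda>_. borel) (\<lambda>p x. x p) I"
  proof (subst prob_space.indep_vars_iff_distr_eq_PiM'[OF P ne])
    show "\<And>i. i \<in> I \<Longrightarrow> (\<lambda>x. x i) \<in> measurable M borel" using meas by auto
    have "distr M (Pi\<^sub>M I (\<lambda>i. borel)) (\<lambda>x. \<lambda>i\<in>I. x i) = distr M M (\<lambda>x. x)"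
      by (rule distr_cong) (auto simp: M_def space_PiM PiE_def extensional_def intro!: sets_PiM_cong)
    also have "\<dots> = M" by simp
    also have "\<dots> = Pi\<^sub>M I (\<lambda>i. distr M borel (\<lambda>x. x i))"
      unfolding M_def by (rule PiM_cong) (auto simp: dc2[unfolded M_def])
    finally show "distr M (Pi\<^sub>M I (\<lambda>i. borel)) (\<lambda>x. \<lambda>i\<in>I. x i) = Pi\<^sub>M I (\<lambda>i. distr M borel (\<lambda>x. x i))" .
  qed
  fix p assume "p \<in> I"
  then show "distributed M lborel (\<lambda>x. x p) (normal_density (\<mu> p) 1)"
    unfolding distributed_def using dc2 meas
    by (auto intro: distr_cong[THEN trans])
qed



lemma std_tail_nn:
  fixes c :: real assumes c: "c > 0"
  shows "(\<integral>\<^sup>+x. ennreal (std_normal_density x) * indicator {c..} x \<partial>lborel) \<le> ennreal (std_normal_density c / c)"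
proof -
  have "(\<integral>\<^sup>+x. ennreal (std_normal_density x) * indicator {c..} x \<partial>lborel)
     \<le> (\<integral>\<^sup>+x. ennreal (1/c) * (ennreal (x * std_normal_density x) * indicator {c..} x) \<partial>lborel)"
  proof (rule nn_integral_mono)
    fix x show "ennreal (std_normal_density x) * indicator {c..} x \<le> ennreal (1/c) * (ennreal (x * std_normal_density x) * indicator {c..} x)"
    proof (cases "c \<le> x")
      case True
      have "std_normal_density x \<le> (1/c) * (x * std_normal_density x)"
        using True c by (simp add: field_simps mult_right_mono)
      then show ?thesis using True c
        by (simp add: ennreal_mult'[symmetric] ennreal_leI)
    qed simp
  qed
  also have "\<dots> = ennreal (1/c) * (\<integral>\<^sup>+x. ennreal (x * std_normal_density x) * indicator {c..} x \<partial>lborel)"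
    by (rule nn_integral_cmult) simp
  also have "(\<integral>\<^sup>+x. ennreal (x * std_normal_density x) * indicator {c..} x \<partial>lborel) = ennreal (0 - (- std_normal_density c))"
  proof (rule nn_integral_FTC_atLeast)
    show "(\<lambda>x. x * std_normal_density x) \<in> borel_measurable borel" by measurable
    fix x :: real
    show "((\<lambda>x. - std_normal_density x) has_real_derivative x * std_normal_density x) (at x)"
      unfolding std_normal_density_def
      apply (rule derivative_eq_intros refl | simp)+
      done
    show "c \<le> x \<Longrightarrow> 0 \<le> x * std_normal_density x" using c by simp
  next
    show "((\<lambda>x. - std_normal_density x) \<longlongrightarrow> 0) at_top"
    proof -
      have a: "filterlim (\<lambda>x::real. x ^ 2) at_top at_top"
        by (rule filterlim_pow_at_top[OF _ filterlim_ident]) simp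
      have b: "filterlim (\<lambda>x::real. (1/2) * x ^ 2) at_top at_top"
        by (rule filterlim_tendsto_pos_mult_at_top[OF tendsto_const _ a]) simp
      have c: "filterlim (\<lambda>x::real. - ((1/2) * x ^ 2)) at_bot at_top"
        using b by (simp add: filterlim_uminus_at_bot)
      have d: "((\<lambda>x::real. exp (- ((1/2) * x ^ 2))) \<longlongrightarrow> 0) at_top"
        by (rule filterlim_compose[OF exp_at_bot c])
      have "((\<lambda>x::real. - ((1 / sqrt (2 * pi)) * exp (- ((1/2) * x ^ 2)))) \<longlongrightarrow> - ((1 / sqrt (2 * pi)) * 0)) at_top"
        by (intro tendsto_intros d)
      then show ?thesis unfolding std_normal_density_def by simp
    qed
  qed
  also have "ennreal (1/c) * ennreal (0 - (- std_normal_density c)) = ennreal (std_normal_density c / c)"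
    using c by (simp add: ennreal_mult'[symmetric])
  finally show ?thesis .
qed

lemma (in prob_space) normal_lower_tail:
  assumes X: "distributed M lborel X (normal_density a \<sigma>)" and a: "a > 0" and s: "\<sigma> > 0"
  shows "prob {x \<in> space M. X x \<le> 0} \<le> std_normal_density (a/\<sigma>) / (a/\<sigma>)"
proof -
  have Z: "distributed M lborel (\<lambda>x. a/\<sigma> + (-1/\<sigma>) * X x) (normal_density (a/\<sigma> + (-1/\<sigma>) * a) (\<bar>-1/\<sigma>\<bar> * \<sigma>))"
    by (rule normal_density_affine[OF X s]) (use s in simp)
  have e: "a/\<sigma> + (-1/\<sigma>) * a = 0" "\<bar>-1/\<sigma>\<bar> * \<sigma> = 1" using s by (auto simp: field_simps)
  define Z where "Z = (\<lambda>x. a/\<sigma> + (-1/\<sigma>) * X x)"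
  have Zd: "distributed M lborel Z std_normal_density" using Z e unfolding Z_def by simp
  have set: "{x \<in> space M. X x \<le> 0} = Z -` {a/\<sigma>..} \<inter> space M"
    using s by (auto simp: Z_def field_simps)
  have "emeasure M {x \<in> space M. X x \<le> 0} \<le> ennreal (std_normal_density (a/\<sigma>) / (a/\<sigma>))"
    unfolding set using distributed_emeasure[OF Zd, of "{a/\<sigma>..}"] std_tail_nn[of "a/\<sigma>"] a s by simp
  then have "enn2real (emeasure M {x \<in> space M. X x \<le> 0}) \<le> enn2real (ennreal (std_normal_density (a/\<sigma>) / (a/\<sigma>)))"
    by (rule enn2real_mono) simp
  then show ?thesis unfolding measure_def using a s by simp
qed

lemma (in prob_space) normal_pos_half:
  assumes X: "distributed M lborel X (normal_density 0 \<sigma>)" and s: "\<sigma> > 0"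
  shows "prob {x \<in> space M. X x > 0} \<le> 1/2"
proof -
  have Y: "distributed M lborel (\<lambda>x. 0 + (-1) * X x) (normal_density (0 + (-1) * 0) (\<bar>-1\<bar> * \<sigma>))"
    by (rule normal_density_affine[OF X s]) simp
  then have Y': "distributed M lborel (\<lambda>x. - X x) (normal_density 0 \<sigma>)" by simp
  have Xm: "X \<in> measurable M borel" using X by (auto simp: distributed_def)
  have "emeasure M {x \<in> space M. X x > 0} = emeasure M {x \<in> space M. - X x > 0}"
  proof -
    have 1: "{x \<in> space M. X x > 0} = X -` {0<..} \<inter> space M" by auto
    have 2: "{x \<in> space M. - X x > 0} = (\<lambda>x. - X x) -` {0<..} \<inter> space M" by auto
    show ?thesis unfolding 1 2 using distributed_emeasure[OF X, of "{0<..}"] distributed_emeasure[OF Y', of "{0<..}"] by simp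
  qed
  then have eq: "prob {x \<in> space M. X x > 0} = prob {x \<in> space M. X x < 0}"
    by (simp add: measure_def)
  have "prob {x \<in> space M. X x > 0} + prob {x \<in> space M. X x < 0} = prob ({x \<in> space M. X x > 0} \<union> {x \<in> space M. X x < 0})"
    using Xm by (intro finite_measure_Union[symmetric]) auto
  also have "\<dots> \<le> 1" by simp
  finally show ?thesis using eq by simp
qed



lemma seq_thr_char:
  "seq_thr n m y K = {i \<in> {1..n}. \<forall>k\<in>{1..K}. 0 < test_stat m y i k}"
  by (induction K) (auto simp: le_Suc_eq)

lemma sum_block:
  fixes i k m :: nat and y :: "nat\<times>nat\<times>nat \<Rightarrow> 'a::comm_monoid_add"
  shows "(\<Sum>p\<in>{i}\<times>{k}\<times>{1..m}. y p) = (\<Sum>j=1..m. y (i, k, j))"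
proof -
  have "{i}\<times>{k}\<times>{1..m} = (\<lambda>j. (i,k,j)) ` {1..m}" by auto
  moreover have "inj_on (\<lambda>j::nat. (i,k,j)) {1..m}" by (auto simp: inj_on_def)
  ultimately show ?thesis by (simp add: sum.reindex)
qed

lemma per_n_bound:
  fixes n K m :: nat and S :: "nat set" and \<theta> :: real
  assumes m: "m \<ge> 1" and K: "K \<ge> 1" and n: "n \<ge> 1" and supp: "S \<subseteq> {1..n}" and pos: "\<theta> > 0"
  shows "measure (obs_space n K m S \<theta>) {y \<in> space (obs_space n K m S \<theta>). seq_thr n m y K \<noteq> S}
     \<le> real n * (1/2)^K + real (card S) * real K *
        (std_normal_density (real m * \<theta> / sqrt (real m)) / (real m * \<theta> / sqrt (real m)))"
proof -
  define I where "I = {1..n}\<times>{1..K}\<times>{1..m}"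
  define \<mu> where "\<mu> = (\<lambda>p::nat\<times>nat\<times>nat. if fst p \<in> S then \<theta> else 0)"
  define M where "M = PiM I (\<lambda>p. density lborel (normal_density (\<mu> p) 1))"
  have finI: "finite I" and neI: "I \<noteq> {}" using m K n by (auto simp: I_def)
  have MM: "obs_space n K m S \<theta> = M"
    unfolding obs_space_def M_def I_def \<mu>_def by (intro PiM_cong) auto
  note c = coords[OF finI neI, where \<mu>=\<mu>, folded M_def]
  interpret P: prob_space M by (rule c(1))
  define J where "J = (\<lambda>i k. {i::nat}\<times>{k::nat}\<times>{1..m})"
  define Y where "Y = (\<lambda>i k (y::nat\<times>nat\<times>nat\<Rightarrow>real). \<Sum>p\<in>J i k. y p)"
  have JI: "J i k \<subseteq> I" if "i \<in> {1..n}" "k \<in> {1..K}" for i k using that by (auto simp: J_def I_def)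
  have finJ: "finite (J i k)" "J i k \<noteq> {}" for i k using m by (auto simp: J_def)
  have cardJ: "card (J i k) = m" for i k
    using sum_block[where i=i and k=k and m=m and y="\<lambda>_. 1::nat"] by (simp add: J_def)
  have Ymeas: "Y i k \<in> borel_measurable M" if "i \<in> {1..n}" "k \<in> {1..K}" for i k
  proof -
    have "(\<lambda>x. x p) \<in> borel_measurable M" if "p \<in> J i k" for p
    proof -
      have "p \<in> I" using that JI[OF \<open>i \<in> {1..n}\<close> \<open>k \<in> {1..K}\<close>] by auto
      then have "(\<lambda>x. x p) \<in> measurable M (density lborel (normal_density (\<mu> p) 1))"
        unfolding M_def by (rule measurable_component_singleton)
      then show ?thesis by (simp cong: measurable_cong_sets)
    qed
    then show ?thesis unfolding Y_def by (intro borel_measurable_sum) auto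
  qed
  have Ydist: "distributed M lborel (Y i k) (normal_density (real m * (if i \<in> S then \<theta> else 0)) (sqrt (real m)))"
    if "i \<in> {1..n}" "k \<in> {1..K}" for i k
  proof -
    have "distributed M lborel (\<lambda>x. \<Sum>p\<in>J i k. x p) (normal_density (\<Sum>p\<in>J i k. \<mu> p) (sqrt (\<Sum>p\<in>J i k. 1\<^sup>2)))"
      by (rule P.sum_indep_normal[OF finJ P.indep_vars_subset[OF c(2) JI[OF that]]])
         (use c(3) JI[OF that] in auto)
    moreover have "(\<Sum>p\<in>J i k. \<mu> p) = real m * (if i \<in> S then \<theta> else 0)"
    proof -
      have "(\<Sum>p\<in>J i k. \<mu> p) = (\<Sum>p\<in>J i k. (if i \<in> S then \<theta> else 0))"
        by (rule sum.cong) (auto simp: \<mu>_def J_def)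
      then show ?thesis by (simp add: cardJ)
    qed
    moreover have "(\<Sum>p\<in>J i k. (1::real)\<^sup>2) = real m" by (simp add: cardJ)
    ultimately show ?thesis by (simp add: Y_def)
  qed
  define A where "A = (\<lambda>i. {y \<in> space M. \<forall>k\<in>{1..K}. Y i k y > 0})"
  define B where "B = (\<lambda>q. {y \<in> space M. Y (fst q) (snd q) y \<le> 0})"
  have Ameas: "A i \<in> sets M" if "i \<in> {1..n}" for i
  proof -
    have "A i = (\<Inter>k\<in>{1..K}. {y \<in> space M. Y i k y > 0}) \<inter> space M" by (auto simp: A_def)
    also have "\<dots> \<in> sets M" using Ymeas[OF that] K by (intro sets.Int sets.finite_INT) auto
    finally show ?thesis .
  qed
  have Bmeas: "B q \<in> sets M" if "fst q \<in> {1..n}" "snd q \<in> {1..K}" for q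
    unfolding B_def using Ymeas[OF that] by measurable
  have stat: "test_stat m y i k = Y i k y / real m" for y i k
    unfolding test_stat_def Y_def J_def sum_block by simp
  have sub: "{y \<in> space M. seq_thr n m y K \<noteq> S} \<subseteq> (\<Union>i\<in>{1..n}-S. A i) \<union> (\<Union>q\<in>S\<times>{1..K}. B q)"
  proof
    fix y assume y: "y \<in> {y \<in> space M. seq_thr n m y K \<noteq> S}"
    then have ys: "y \<in> space M" by auto
    have pos_iff: "0 < test_stat m y i k \<longleftrightarrow> 0 < Y i k y" for i k
      using m by (simp add: stat divide_pos_pos zero_less_divide_iff)
    from y obtain i where "i \<in> seq_thr n m y K \<and> i \<notin> S \<or> i \<notin> seq_thr n m y K \<and> i \<in> S" by blast
    then show "y \<in> (\<Union>i\<in>{1..n}-S. A i) \<union> (\<Union>q\<in>S\<times>{1..K}. B q)"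
    proof
      assume "i \<in> seq_thr n m y K \<and> i \<notin> S"
      then show ?thesis using ys by (auto simp: seq_thr_char A_def pos_iff)
    next
      assume h: "i \<notin> seq_thr n m y K \<and> i \<in> S"
      then have "i \<in> {1..n}" using supp by auto
      with h obtain k where "k \<in> {1..K}" "\<not> 0 < Y i k y" by (auto simp: seq_thr_char pos_iff)
      then show ?thesis using ys h by (intro UnI2 UN_I[of "(i,k)"]) (auto simp: B_def)
    qed
  qed
  have PA: "P.prob (A i) \<le> (1/2)^K" if "i \<in> {1..n} - S" for i
  proof -
    have ind0: "P.indep_vars (\<lambda>k. PiM (J i k) (\<lambda>_. borel)) (\<lambda>k \<omega>. restrict (\<lambda>p. \<omega> p) (J i k)) {1..K}"
      by (rule P.indep_vars_restrict[OF c(2)]) (use JI that in \<open>auto simp: disjoint_family_on_def J_def\<close>)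
    have ind1: "P.indep_vars (\<lambda>_. borel) (\<lambda>k. (\<lambda>r. \<Sum>p\<in>J i k. r p) \<circ> (\<lambda>\<omega>. restrict (\<lambda>p. \<omega> p) (J i k))) {1..K}"
      by (rule P.indep_vars_compose[OF ind0]) measurable
    have ind: "P.indep_vars (\<lambda>_. borel) (Y i) {1..K}"
      using ind1 by (subst P.indep_vars_cong[of _ _ _ "(\<lambda>k. (\<lambda>r. \<Sum>p\<in>J i k. r p) \<circ> (\<lambda>\<omega>. restrict (\<lambda>p. \<omega> p) (J i k)))" _ "\<lambda>_. borel"])
        (auto simp: Y_def fun_eq_iff intro!: sum.cong)
    have "A i = (\<Inter>k\<in>{1..K}. Y i k -` {0<..} \<inter> space M)"
      using K by (auto simp: A_def)
    then have "P.prob (A i) = (\<Prod>k\<in>{1..K}. P.prob (Y i k -` {0<..} \<inter> space M))"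
      using P.indep_varsD[OF ind, of "{1..K}" "\<lambda>_. {0<..}"] K by auto
    also have "\<dots> \<le> (\<Prod>k\<in>{1..K}. 1/2)"
    proof (rule prod_mono)
      fix k assume k: "k \<in> {1..K}"
      have d: "distributed M lborel (Y i k) (normal_density 0 (sqrt (real m)))"
        using Ydist[of i k] k that by auto
      have "Y i k -` {0<..} \<inter> space M = {x \<in> space M. Y i k x > 0}" by auto
      then show "0 \<le> P.prob (Y i k -` {0<..} \<inter> space M) \<and> P.prob (Y i k -` {0<..} \<inter> space M) \<le> 1/2"
        using P.normal_pos_half[OF d] m by auto
    qed
    also have "\<dots> = (1/2)^K" by simp
    finally show ?thesis .
  qed
  define x where "x = real m * \<theta> / sqrt (real m)"
  have PB: "P.prob (B q) \<le> std_normal_density x / x" if hq: "q \<in> S\<times>{1..K}" for q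
  proof -
    obtain i k where q: "q = (i,k)" "i \<in> S" "k \<in> {1..K}" using hq by (cases q) auto
    have d: "distributed M lborel (Y i k) (normal_density (real m * \<theta>) (sqrt (real m)))"
      using Ydist[of i k] q supp by auto
    show ?thesis unfolding q B_def x_def using P.normal_lower_tail[OF d] m pos by simp
  qed
  have UA: "(\<Union>i\<in>{1..n}-S. A i) \<in> sets M" by (intro sets.finite_UN) (auto intro: Ameas)
  have UB: "(\<Union>q\<in>S\<times>{1..K}. B q) \<in> sets M"
    using supp finite_subset[OF supp] by (intro sets.finite_UN) (auto intro!: Bmeas)
  have "P.prob {y \<in> space M. seq_thr n m y K \<noteq> S} \<le> P.prob ((\<Union>i\<in>{1..n}-S. A i) \<union> (\<Union>q\<in>S\<times>{1..K}. B q))"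
    by (rule P.finite_measure_mono[OF sub]) (use UA UB in auto)
  also have "\<dots> \<le> P.prob (\<Union>i\<in>{1..n}-S. A i) + P.prob (\<Union>q\<in>S\<times>{1..K}. B q)"
    by (rule measure_Un_le[OF UA UB])
  also have "P.prob (\<Union>i\<in>{1..n}-S. A i) \<le> (\<Sum>i\<in>{1..n}-S. P.prob (A i))"
    by (rule measure_UNION_le) (use Ameas supp in auto)
  also have "\<dots> \<le> (\<Sum>i\<in>{1..n}-S. (1/2)^K)" by (rule sum_mono) (rule PA)
  also have "\<dots> \<le> real n * (1/2)^K"
  proof -
    have "card ({1..n}-S) \<le> n" using card_Diff_subset[of S "{1..n}"] by (metis card_atLeastAtMost card_mono diff_Suc_1 Diff_subset finite_atLeastAtMost)
    then show ?thesis by simp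
  qed
  also have "P.prob (\<Union>q\<in>S\<times>{1..K}. B q) \<le> (\<Sum>q\<in>S\<times>{1..K}. P.prob (B q))"
    by (rule measure_UNION_le) (use Bmeas supp finite_subset[OF supp] in auto)
  also have "\<dots> \<le> (\<Sum>q\<in>S\<times>{1..K}. std_normal_density x / x)" by (rule sum_mono) (rule PB)
  also have "\<dots> = real (card S) * real K * (std_normal_density x / x)"
    by (simp add: card_cartesian_product)
  finally show ?thesis unfolding MM x_def by simp
qed



lemma term1:
  fixes n K :: nat and e :: real
  assumes n: "n \<ge> 1" and e: "e > 0" and K: "real K \<ge> (1+e) * log 2 (real n)"
  shows "real n * (1/2)^K \<le> real n powr (-e)"
proof -
  have "real n powr (1+e) = (2 powr log 2 (real n)) powr (1+e)" using n by simp
  also have "\<dots> = 2 powr ((1+e) * log 2 (real n))" by (simp add: powr_powr mult.commute)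
  also have "\<dots> \<le> 2 powr (real K)" by (rule powr_mono[OF K]) simp
  also have "\<dots> = 2 ^ K" by (simp add: powr_realpow)
  finally have le: "real n powr (1+e) \<le> 2 ^ K" .
  have "real n * (1/2)^K = real n / 2 ^ K" by (simp add: power_one_over)
  also have "\<dots> \<le> real n / real n powr (1+e)"
    using le n by (intro divide_left_mono) auto
  also have "\<dots> = real n powr (-e)"
    using n by (simp add: powr_add powr_minus_divide)
  finally show ?thesis .
qed

lemma term2:
  fixes s K m :: nat and \<theta> L e :: real
  assumes L: "L > 1" and e: "e > 0" and m: "m \<ge> 1" and pos: "\<theta> > 0"
    and Kle: "real K \<le> (2+e) * L"
    and gr: "\<theta> > sqrt (2 / real m * ln (real s * L))"
  shows "real s * real K * (std_normal_density (real m * \<theta> / sqrt (real m)) / (real m * \<theta> / sqrt (real m)))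
     \<le> (2+e) / (sqrt (2*pi) * sqrt (2 * ln L))"
proof (cases "s = 0")
  case True
  then show ?thesis using L e by (simp add: divide_nonneg_pos)
next
  case False
  then have s1: "real s \<ge> 1" by simp
  define x where "x = real m * \<theta> / sqrt (real m)"
  have x: "x = sqrt (real m) * \<theta>" using m
    by (simp add: x_def real_sqrt_mult[symmetric] field_simps)
  have sL: "real s * L \<ge> L" using s1 L by simp
  have lnL: "ln L > 0" using L by simp
  have lnsL: "ln (real s * L) \<ge> ln L" using sL L by simp
  have "sqrt (2 / real m * ln (real s * L))^2 < \<theta>^2"
    using gr lnsL lnL by (intro power_strict_mono) auto
  then have "2 / real m * ln (real s * L) < \<theta>^2" using lnsL lnL m by simp
  then have x2: "2 * ln (real s * L) < x^2" using m
    by (simp add: x power_mult_distrib field_simps)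
  have xpos: "x > 0" using m pos by (simp add: x)
  have xge: "sqrt (2 * ln L) \<le> x"
  proof -
    have "2 * ln L \<le> x^2" using x2 lnsL by simp
    then show ?thesis using xpos by (metis real_sqrt_le_mono real_sqrt_abs abs_of_pos)
  qed
  have phi: "std_normal_density x \<le> 1 / (sqrt (2*pi) * (real s * L))"
  proof -
    have "exp (-(x\<^sup>2) / 2) \<le> exp (- ln (real s * L))" using x2 by simp
    also have "\<dots> = 1 / (real s * L)" using sL L by (simp add: exp_minus field_simps)
    finally show ?thesis unfolding std_normal_density_def by (simp add: divide_right_mono field_simps)
  qed
  have "real s * real K * (std_normal_density x / x) \<le> real s * ((2+e) * L) * ((1 / (sqrt (2*pi) * (real s * L))) / x)"
    using Kle phi xpos by (intro mult_mono divide_right_mono) auto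
  also have "\<dots> = (2+e) / (sqrt (2*pi) * x)" using s1 L xpos by (simp add: field_simps)
  also have "\<dots> \<le> (2+e) / (sqrt (2*pi) * sqrt (2 * ln L))"
    using xge lnL e xpos by (intro divide_left_mono mult_left_mono mult_pos_pos) auto
  finally show ?thesis unfolding x_def .
qed

theorem corollary2:
  fixes m :: nat and \<epsilon> :: real and S :: "nat \<Rightarrow> nat set" and \<theta> :: "nat \<Rightarrow> real"
  assumes m: "m \<ge> 1"
    and eps: "\<epsilon> > 0"
    and supp: "\<And>n. S n \<subseteq> {1..n}"
    and pos: "\<And>n. \<theta> n > 0"
    and growth: "eventually (\<lambda>n. \<theta> n > sqrt (2 / real m * ln (real (card (S n)) * log 2 (real n)))) sequentially"
  shows "(\<lambda>n. measure (obs_space n (num_passes \<epsilon> n) m (S n) (\<theta> n))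
            {y \<in> space (obs_space n (num_passes \<epsilon> n) m (S n) (\<theta> n)).
               seq_thr n m y (num_passes \<epsilon> n) \<noteq> S n}) \<longlonglongrightarrow> 0"
proof -
  define P where "P = (\<lambda>n. measure (obs_space n (num_passes \<epsilon> n) m (S n) (\<theta> n))
            {y \<in> space (obs_space n (num_passes \<epsilon> n) m (S n) (\<theta> n)).
               seq_thr n m y (num_passes \<epsilon> n) \<noteq> S n})"
  define g where "g = (\<lambda>n::nat. real n powr (-\<epsilon>) + (2+\<epsilon>) / (sqrt (2*pi) * sqrt (2 * ln (log 2 (real n)))))"
  have glim: "g \<longlonglongrightarrow> 0" unfolding g_def using eps by real_asymp
  obtain N where N: "\<And>n. n \<ge> N \<Longrightarrow> \<theta> n > sqrt (2 / real m * ln (real (card (S n)) * log 2 (real n)))"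
    using growth unfolding eventually_sequentially by blast
  have ev: "eventually (\<lambda>n. P n \<le> g n) sequentially"
    unfolding eventually_sequentially
  proof (intro exI[of _ "max N 3"] allI impI)
    fix n assume n: "max N 3 \<le> n"
    define L where "L = log 2 (real n)"
    define K where "K = num_passes \<epsilon> n"
    have L1: "L > 1" unfolding L_def using n by (subst less_log_iff) auto
    have Lpos: "(1+\<epsilon>) * L > 0" using L1 eps by simp
    have K_eq: "real K = of_int \<lceil>(1+\<epsilon>) * L\<rceil>"
      unfolding K_def num_passes_def L_def[symmetric] using Lpos by simp
    have Kge: "real K \<ge> (1+\<epsilon>) * L" unfolding K_eq by (rule le_of_int_ceiling)
    have "real K \<le> (1+\<epsilon>) * L + 1" unfolding K_eq by (rule of_int_ceiling_le_add_one)
    then have Kle: "real K \<le> (2+\<epsilon>) * L" using L1 by (simp add: algebra_simps)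
    have K1: "K \<ge> 1" using Kge Lpos by simp
    have "P n \<le> real n * (1/2)^K + real (card (S n)) * real K *
        (std_normal_density (real m * \<theta> n / sqrt (real m)) / (real m * \<theta> n / sqrt (real m)))"
      unfolding P_def K_def[symmetric] using n by (intro per_n_bound m K1 supp pos) auto
    also have "\<dots> \<le> g n"
      unfolding g_def
    proof (rule add_mono)
      show "real n * (1/2)^K \<le> real n powr (-\<epsilon>)"
        using n eps Kge unfolding L_def by (intro term1) auto
      show "real (card (S n)) * real K *
        (std_normal_density (real m * \<theta> n / sqrt (real m)) / (real m * \<theta> n / sqrt (real m)))
        \<le> (2+\<epsilon>) / (sqrt (2*pi) * sqrt (2 * ln (log 2 (real n))))"
        using term2[OF L1 eps m pos Kle] N[of n] n unfolding L_def by auto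
    qed
    finally show "P n \<le> g n" .
  qed
  have ev0: "eventually (\<lambda>n. 0 \<le> P n) sequentially" unfolding P_def by simp
  show ?thesis unfolding P_def[symmetric]
    by (rule tendsto_sandwich[OF ev0 ev tendsto_const glim])
qed


end
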